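(* There is an absolute constant $C$ such that the following holds. Let $\Sigma$ be a set with $|\Sigma|=r\ge 2$. If $n\ge 2+\log r$ and $\ell\ge 2^7r^3n$, then there exists a set $S\subseteq\Sigma^\ell$ of size $2^n$ such that for all $(v,a)\in S\times\Sigma$: (1) $|v[a]|\ge \frac{\ell}{2r}$; and (2) for every $I\subseteq v[a]$ of size $\ell/(8r)$, there are at most $Cr^2$ pairs $(w,b)\in S\times\Sigma$ for which $|I\cap w[b]|\ge \frac12|v[a]\cap w[b]|$.
   Context: For $v=(v_1,\dots,v_\ell)\in\Sigma^\ell$ and $a\in\Sigma$, $v[a]=\{i\in\{1,\dots,\ell\}: v_i=a\}$. Logarithms are base 2. *)

theory Defs
  imports Complex_Main
begin

text \<open>Words v in Sigma^l are lists of length l; positions are 0-based (0..l-1).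
  occ v a is the paper's v[a], the set of positions where v has letter a.\<close>
definition occ :: "'a list \<Rightarrow> 'a \<Rightarrow> nat set" where
  "occ v a = {i. i < length v \<and> v ! i = a}"

end

theory Submission
  imports Defs "HOL-Library.FuncSet"
begin

lemma sum_lists_prod:
  fixes g :: "nat \<Rightarrow> 'a \<Rightarrow> real"
  assumes "finite A"
  shows "(\<Sum>w\<in>{xs. set xs \<subseteq> A \<and> length xs = l}. \<Prod>i<l. g i (w!i)) = (\<Prod>i<l. \<Sum>c\<in>A. g i c)"
proof (induction l arbitrary: g)
  case 0
  have "{xs. set xs \<subseteq> A \<and> length xs = 0} = {[]}" by auto
  then show ?case by simp
next
  case (Suc l)
  let ?W = "{xs. set xs \<subseteq> A \<and> length xs = l}"
  have inj: "inj_on (\<lambda>(xs, n). n#xs) (?W \<times> A)" by (auto simp: inj_on_def)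
  have "(\<Sum>w\<in>{xs. set xs \<subseteq> A \<and> length xs = Suc l}. \<Prod>i<Suc l. g i (w!i))
      = (\<Sum>p\<in>?W \<times> A. \<Prod>i<Suc l. g i ((snd p # fst p)!i))"
    unfolding lists_length_Suc_eq by (subst sum.reindex[OF inj]) (simp add: case_prod_beta)
  also have "\<dots> = (\<Sum>p\<in>?W \<times> A. g 0 (snd p) * (\<Prod>i<l. g (Suc i) (fst p ! i)))"
    by (simp add: prod.lessThan_Suc_shift del: prod.lessThan_Suc)
  also have "\<dots> = (\<Sum>w\<in>?W. \<Sum>c\<in>A. g 0 c * (\<Prod>i<l. g (Suc i) (w ! i)))"
    by (simp add: sum.cartesian_product case_prod_beta)
  also have "\<dots> = (\<Sum>c\<in>A. g 0 c) * (\<Sum>w\<in>?W. (\<Prod>i<l. g (Suc i) (w ! i)))"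
    by (simp add: sum_distrib_left sum_distrib_right sum.swap[of _ ?W A])
  also have "\<dots> = (\<Sum>c\<in>A. g 0 c) * (\<Prod>i<l. \<Sum>c\<in>A. g (Suc i) c)"
    using Suc.IH[of "\<lambda>i. g (Suc i)"] by simp
  also have "\<dots> = (\<Prod>i<Suc l. \<Sum>c\<in>A. g i c)"
    by (simp add: prod.lessThan_Suc_shift del: prod.lessThan_Suc)
  finally show ?case .
qed

lemma markov_prod:
  fixes g :: "nat \<Rightarrow> 'a \<Rightarrow> real"
  assumes "finite A" "\<And>i c. 0 \<le> g i c" "S \<subseteq> {xs. set xs \<subseteq> A \<and> length xs = l}"
    "\<And>w. w \<in> S \<Longrightarrow> 1 \<le> (\<Prod>i<l. g i (w!i))"
  shows "real (card S) \<le> (\<Prod>i<l. \<Sum>c\<in>A. g i c)"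
proof -
  let ?W = "{xs. set xs \<subseteq> A \<and> length xs = l}"
  have fW: "finite ?W" using finite_lists_length_eq[OF assms(1)] .
  have "real (card S) = (\<Sum>w\<in>S. 1)" by simp
  also have "\<dots> \<le> (\<Sum>w\<in>S. \<Prod>i<l. g i (w!i))" by (rule sum_mono) (use assms(4) in auto)
  also have "\<dots> \<le> (\<Sum>w\<in>?W. \<Prod>i<l. g i (w!i))"
    by (rule sum_mono2[OF fW assms(3)]) (auto intro: prod_nonneg assms(2))
  also have "\<dots> = (\<Prod>i<l. \<Sum>c\<in>A. g i c)" by (rule sum_lists_prod[OF assms(1)])
  finally show ?thesis .
qed

lemma card_UN_real:
  assumes "finite A" "\<And>i. i \<in> A \<Longrightarrow> real (card (F i)) \<le> b"
  shows "real (card (\<Union>i\<in>A. F i)) \<le> real (card A) * b"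
proof -
  have "real (card (\<Union>i\<in>A. F i)) \<le> real (\<Sum>i\<in>A. card (F i))"
    using card_UN_le[OF assms(1)] of_nat_le_iff by blast
  also have "\<dots> = (\<Sum>i\<in>A. real (card (F i)))" by simp
  also have "\<dots> \<le> real (card A) * b" using sum_bounded_above[of A "\<lambda>i. real (card (F i))" b] assms(2) by auto
  finally show ?thesis .
qed

lemma prod_if_const:
  fixes x :: real
  assumes "finite A"
  shows "(\<Prod>i\<in>A. if P i then x else 1) = x ^ card {i\<in>A. P i}"
proof -
  have "(\<Prod>i\<in>A. if P i then x else 1) = (\<Prod>i\<in>A \<inter> {i. P i}. x) * (\<Prod>i\<in>A \<inter> - {i. P i}. 1)"
    by (rule prod.If_cases[OF assms])
  also have "\<dots> = x ^ card (A \<inter> {i. P i})" by simp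
  also have "A \<inter> {i. P i} = {i\<in>A. P i}" by auto
  finally show ?thesis .
qed

lemma sum_if_const0:
  fixes x :: real
  assumes "finite A" "I \<subseteq> A"
  shows "(\<Sum>i\<in>A. if i \<in> I then x else 0) = real (card I) * x"
proof -
  have "(\<Sum>i\<in>A. if i \<in> I then x else 0) = (\<Sum>i\<in>A \<inter> {i. i \<in> I}. x) + (\<Sum>i\<in>A \<inter> - {i. i \<in> I}. 0)"
    by (rule sum.If_cases[OF assms(1)])
  also have "A \<inter> {i. i \<in> I} = I" using assms(2) by auto
  finally show ?thesis by simp
qed

lemma sum_if_const1:
  fixes y :: real
  assumes "finite A" "B \<subseteq> A"
  shows "(\<Sum>c\<in>A. if c \<in> B then y else 1) = real (card B) * y + (real (card A) - real (card B))"
proof -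
  have "(\<Sum>c\<in>A. if c \<in> B then y else 1) = (\<Sum>c\<in>A \<inter> {c. c \<in> B}. y) + (\<Sum>c\<in>A \<inter> - {c. c \<in> B}. 1)"
    by (rule sum.If_cases[OF assms(1)])
  also have "A \<inter> {c. c \<in> B} = B" using assms(2) by auto
  also have "A \<inter> - {c. c \<in> B} = A - B" by auto
  finally have "(\<Sum>c\<in>A. if c \<in> B then y else 1) = real (card B) * y + real (card (A - B))" by simp
  moreover have "card (A - B) = card A - card B" using card_Diff_subset assms finite_subset by blast
  moreover have "card B \<le> card A" using assms card_mono by blast
  ultimately show ?thesis by simp
qed

lemma occ_sub: "occ v a \<subseteq> {..<length v}"
  by (auto simp: occ_def)

lemma word_bad_count:
  fixes A :: "nat set"
  assumes fin: "finite A" and cA: "card A = r" and r0: "r > 0"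
    and v: "length v = l" and I: "I \<subseteq> occ v a" and kI: "real (card I) \<le> real l / (8*r) + 1"
    and m: "l \<le> 2*r*card (occ v a)" and B: "B \<subseteq> A"
  shows "real (card {w. (length w = l \<and> set w \<subseteq> A) \<and>
            (\<forall>b\<in>B. card (occ v a \<inter> occ w b) \<le> 2 * card (I \<inter> occ w b))})
         \<le> real r ^ l * exp (- real (card B) * ((real l / (8*r) - 3) / (2*r)))"
proof -
  define J where "J = occ v a - I"
  define t where "t = card B"
  define g where "g = (\<lambda>i c. if c \<in> B then (if i \<in> I then 2 else if i \<in> J then 1/2 else 1) else (1::real))"
  define \<theta> where "\<theta> = (\<lambda>i. (if i \<in> I then real t / r else 0) + (if i \<in> J then - (real t / (2*r)) else 0))"
  have finB: "finite B" using B fin finite_subset by blast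
  have Il: "I \<subseteq> {..<l}" using I occ_sub[of v a] v by auto
  have Jl: "J \<subseteq> {..<l}" using occ_sub[of v a] v by (auto simp: J_def)
  have IJ: "I \<inter> J = {}" by (auto simp: J_def)
  have finI: "finite I" using Il finite_subset by blast
  have finJ: "finite J" using Jl finite_subset by blast
  let ?S = "{w. (length w = l \<and> set w \<subseteq> A) \<and>
            (\<forall>b\<in>B. card (occ v a \<inter> occ w b) \<le> 2 * card (I \<inter> occ w b))}"
  have key: "1 \<le> (\<Prod>i<l. g i (w!i))" if w: "w \<in> ?S" for w
  proof -
    have lw: "length w = l" using w by auto
    have bb: "card (J \<inter> occ w b) \<le> card (I \<inter> occ w b)" if "b \<in> B" for b
    proof -
      have "occ v a \<inter> occ w b = (I \<inter> occ w b) \<union> (J \<inter> occ w b)" using I by (auto simp: J_def)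
      hence "card (occ v a \<inter> occ w b) = card (I \<inter> occ w b) + card (J \<inter> occ w b)"
        using finI finJ IJ by (simp add: card_Un_disjoint disjoint_iff)
      thus ?thesis using w that by auto
    qed
    have XI: "{i\<in>I. w!i \<in> B} = (\<Union>b\<in>B. I \<inter> occ w b)" using Il lw by (auto simp: occ_def)
    have XJ: "{i\<in>J. w!i \<in> B} = (\<Union>b\<in>B. J \<inter> occ w b)" using Jl lw by (auto simp: occ_def)
    have cX: "card {i\<in>I. w!i \<in> B} = (\<Sum>b\<in>B. card (I \<inter> occ w b))"
      unfolding XI by (rule card_UN_disjoint[OF finB]) (use finI in \<open>auto simp: occ_def\<close>)
    have cY: "card {i\<in>J. w!i \<in> B} = (\<Sum>b\<in>B. card (J \<inter> occ w b))"
      unfolding XJ by (rule card_UN_disjoint[OF finB]) (use finJ in \<open>auto simp: occ_def\<close>)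
    have YX: "card {i\<in>J. w!i \<in> B} \<le> card {i\<in>I. w!i \<in> B}"
      unfolding cX cY by (rule sum_mono) (rule bb)
    have "(\<Prod>i<l. g i (w!i)) = (\<Prod>i<l. (if i \<in> I \<and> w!i \<in> B then 2 else 1) * (if i \<in> J \<and> w!i \<in> B then 1/2 else 1))"
      by (rule prod.cong) (use IJ in \<open>auto simp: g_def\<close>)
    also have "\<dots> = (\<Prod>i<l. (if i \<in> I \<and> w!i \<in> B then 2 else 1)) * (\<Prod>i<l. (if i \<in> J \<and> w!i \<in> B then 1/2 else 1))"
      by (rule prod.distrib)
    also have "\<dots> = 2 ^ card {i\<in>{..<l}. i \<in> I \<and> w!i \<in> B} * (1/2) ^ card {i\<in>{..<l}. i \<in> J \<and> w!i \<in> B}"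
      by (simp add: prod_if_const)
    also have "{i\<in>{..<l}. i \<in> I \<and> w!i \<in> B} = {i\<in>I. w!i \<in> B}" using Il by auto
    also have "{i\<in>{..<l}. i \<in> J \<and> w!i \<in> B} = {i\<in>J. w!i \<in> B}" using Jl by auto
    finally have eq: "(\<Prod>i<l. g i (w!i)) = 2 ^ card {i\<in>I. w!i \<in> B} * (1/2) ^ card {i\<in>J. w!i \<in> B}" .
    have "(1::real) = 2 ^ card {i\<in>J. w!i \<in> B} * (1/2) ^ card {i\<in>J. w!i \<in> B}"
      by (simp add: power_one_over)
    also have "\<dots> \<le> 2 ^ card {i\<in>I. w!i \<in> B} * (1/2) ^ card {i\<in>J. w!i \<in> B}"
      by (rule mult_right_mono) (use YX in \<open>auto intro: power_increasing\<close>)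
    finally show ?thesis using eq by simp
  qed
  have "real (card ?S) \<le> (\<Prod>i<l. \<Sum>c\<in>A. g i c)"
    apply (rule markov_prod[OF fin])
      apply (simp add: g_def)
     apply blast
    apply (rule key)
    apply assumption
    done
  also have "\<dots> \<le> (\<Prod>i<l. real r * exp (\<theta> i))"
  proof (rule prod_mono)
    fix i assume "i \<in> {..<l}"
    have nn: "0 \<le> (\<Sum>c\<in>A. g i c)" by (rule sum_nonneg) (auto simp: g_def)
    have rpos: "real r > 0" using r0 by simp
    have "(\<Sum>c\<in>A. g i c) \<le> real r * exp (\<theta> i)"
    proof (cases "i \<in> I")
      case True
      have "(\<Sum>c\<in>A. g i c) = (\<Sum>c\<in>A. if c \<in> B then 2 else 1)" by (simp add: g_def True)
      also have "\<dots> = real t * 2 + (real r - real t)" using sum_if_const1[OF fin B, of 2] cA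
        by (simp add: t_def)
      also have "\<dots> = real r * (1 + real t / r)" using rpos
        by (simp add: field_simps)
      also have "\<dots> \<le> real r * exp (real t / r)" using rpos by (intro mult_left_mono) auto
      finally show ?thesis using True IJ by (auto simp: \<theta>_def)
    next
      case F: False
      show ?thesis
      proof (cases "i \<in> J")
        case True
        have "(\<Sum>c\<in>A. g i c) = (\<Sum>c\<in>A. if c \<in> B then 1/2 else 1)" by (simp add: g_def True F)
        also have "\<dots> = real t * (1/2) + (real r - real t)" using sum_if_const1[OF fin B, of "1/2"] cA
          by (simp add: t_def)
        also have "\<dots> = real r * (1 + - (real t / (2*r)))" using rpos
          by (simp add: field_simps)
        also have "\<dots> \<le> real r * exp (- (real t / (2*r)))" using rpos by (intro mult_left_mono exp_ge_add_one_self) auto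
        finally show ?thesis using True F by (auto simp: \<theta>_def)
      next
        case False
        have "(\<Sum>c\<in>A. g i c) = real r" by (simp add: g_def False F cA)
        thus ?thesis using False F by (auto simp: \<theta>_def)
      qed
    qed
    with nn show "0 \<le> (\<Sum>c\<in>A. g i c) \<and> (\<Sum>c\<in>A. g i c) \<le> real r * exp (\<theta> i)" by simp
  qed
  also have "\<dots> = real r ^ l * exp (\<Sum>i<l. \<theta> i)"
    by (simp add: prod.distrib exp_sum)
  also have "(\<Sum>i<l. \<theta> i) = real (card I) * (real t / r) + real (card J) * (- (real t / (2*r)))"
    unfolding \<theta>_def sum.distrib using sum_if_const0[OF _ Il] sum_if_const0[OF _ Jl] by simp
  also have "\<dots> \<le> - real (card B) * ((real l / (8*r) - 3) / (2*r))"
  proof -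
    have rpos: "real r > 0" using r0 by simp
    have co: "card (occ v a) = card I + card J"
    proof -
      have "occ v a = I \<union> J" using I by (auto simp: J_def)
      thus ?thesis using finI finJ IJ card_Un_disjoint by auto
    qed
    have m': "real l \<le> 2 * r * (real (card I) + real (card J))"
      using m co by (metis of_nat_add of_nat_le_iff of_nat_mult of_nat_numeral)
    have m'': "real l / (2*r) \<le> real (card I) + real (card J)"
      using m' rpos by (simp add: field_simps)
    have "real l / (2*r) = 4 * (real l / (8*r))" by (simp add: field_simps)
    hence L: "2 * real (card I) - real (card J) + (real l / (8*r) - 3) \<le> 0"
      using m'' kI by linarith
    have "real (card I) * (real t / r) + real (card J) * (- (real t / (2*r))) + real t * ((real l / (8*r) - 3) / (2*r))
        = (real t / (2*r)) * (2 * real (card I) - real (card J) + (real l / (8*r) - 3))"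
      using rpos by (simp add: field_simps)
    also have "\<dots> \<le> 0" using L rpos by (intro mult_nonneg_nonpos) auto
    finally show ?thesis by (simp add: t_def)
  qed
  finally show ?thesis using r0 by simp
qed

lemma card_PiE_single:
  assumes "i < N" "finite T" "finite W"
  shows "card (PiE {..<N} (\<lambda>j. if j = i then T else W)) = card T * card W ^ (N - 1)"
proof -
  have "card (PiE {..<N} (\<lambda>j. if j = i then T else W)) = (\<Prod>j<N. card (if j = i then T else W))"
    by (rule card_PiE) simp
  also have "\<dots> = card (if i = i then T else W) * (\<Prod>j\<in>{..<N} - {i}. card (if j = i then T else W))"
    by (rule prod.remove) (use assms in auto)
  also have "(\<Prod>j\<in>{..<N} - {i}. card (if j = i then T else W)) = (\<Prod>j\<in>{..<N} - {i}. card W)"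
    by (rule prod.cong) auto
  also have "\<dots> = card W ^ (N - 1)" using assms by simp
  finally show ?thesis by simp
qed

lemma card_eq_pair:
  assumes "i < N" "j < N" "i \<noteq> j" "finite W"
  shows "card {x \<in> PiE {..<N} (\<lambda>_. W). x i = x j} \<le> card W ^ (N - 1)"
proof -
  let ?S = "{x \<in> PiE {..<N} (\<lambda>_. W). x i = x j}"
  let ?f = "\<lambda>x. restrict x ({..<N} - {j})"
  have inj: "inj_on ?f ?S"
  proof (rule inj_onI)
    fix x y assume x: "x \<in> ?S" and y: "y \<in> ?S" and e: "?f x = ?f y"
    show "x = y"
    proof
      fix m
      show "x m = y m"
      proof (cases "m < N")
        case True
        show ?thesis
        proof (cases "m = j")
          case True
          have "x i = y i" using assms fun_cong[OF e, of i] by (auto simp: restrict_def)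
          moreover have "x j = x i" "y j = y i" using x y by auto
          ultimately show ?thesis using True by simp
        next
          case False
          thus ?thesis using fun_cong[OF e, of m] \<open>m < N\<close> by auto
        qed
      next
        case False
        have "x m = undefined" using x False by (intro PiE_arb[of x "{..<N}" "\<lambda>_. W"]) auto
        moreover have "y m = undefined" using y False by (intro PiE_arb[of y "{..<N}" "\<lambda>_. W"]) auto
        ultimately show ?thesis by simp
      qed
    qed
  qed
  have sub: "?f ` ?S \<subseteq> PiE ({..<N} - {j}) (\<lambda>_. W)"
  proof
    fix z assume "z \<in> ?f ` ?S"
    then obtain x where x: "x \<in> ?S" and z: "z = ?f x" by blast
    have "\<forall>m\<in>{..<N} - {j}. x m \<in> W" using x by (simp add: PiE_iff)
    thus "z \<in> PiE ({..<N} - {j}) (\<lambda>_. W)" unfolding z by (simp only: restrict_PiE_iff)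
  qed
  have "card ?S = card (?f ` ?S)" using card_image[OF inj] by simp
  also have "\<dots> \<le> card (PiE ({..<N} - {j}) (\<lambda>_. W))"
    by (rule card_mono[OF _ sub]) (use assms in \<open>auto intro: finite_PiE\<close>)
  also have "\<dots> = card W ^ (N - 1)" using assms by (simp add: card_PiE)
  finally show ?thesis .
qed

lemma choose_le_pow: "m choose K \<le> m ^ K"
  by (cases "K \<le> m") (auto intro: binomial_le_pow simp: binomial_eq_0)

lemma card_UN_real2:
  assumes "finite A" "\<And>i. i \<in> A \<Longrightarrow> real (card (F i)) \<le> b" "real (card A) \<le> M" "0 \<le> b"
  shows "real (card (\<Union>i\<in>A. F i)) \<le> M * b"
proof -
  have "real (card (\<Union>i\<in>A. F i)) \<le> real (card A) * b" by (rule card_UN_real[OF assms(1,2)])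
  also have "\<dots> \<le> M * b" using assms(3,4) by (rule mult_right_mono)
  finally show ?thesis .
qed

lemma few_a_count:
  fixes A :: "nat set"
  assumes fin: "finite A" and cA: "card A = r" and r0: "r > 0" and a: "a \<in> A"
  shows "real (card {w. (length w = l \<and> set w \<subseteq> A) \<and> l > 2 * r * card (occ w a)})
         \<le> real r ^ l * exp (- (real l / (12 * r)))"
proof -
  let ?S = "{w. (length w = l \<and> set w \<subseteq> A) \<and> l > 2 * r * card (occ w a)}"
  define g where "g = (\<lambda>(i::nat) c. exp (1 / (4 * real r)) * (if c = a then exp (- 1/2) else (1::real)))"
  have rpos: "real r > 0" using r0 by simp
  have key: "1 \<le> (\<Prod>i<l. g i (w!i))" if w: "w \<in> ?S" for w
  proof -
    have lw: "length w = l" using w by auto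
    have "(\<Prod>i<l. g i (w!i)) = exp (1 / (4 * real r)) ^ l * (\<Prod>i<l. if w!i = a then exp (- 1/2) else 1)"
      by (simp add: g_def prod.distrib)
    also have "(\<Prod>i<l. if w!i = a then exp (- 1/2) else (1::real)) = exp (-1/2) ^ card {i\<in>{..<l}. w!i = a}"
      by (rule prod_if_const) simp
    also have "{i\<in>{..<l}. w!i = a} = occ w a" using lw by (auto simp: occ_def)
    also have "exp (1 / (4 * real r)) ^ l * exp (-1/2) ^ card (occ w a) = exp (real l * (1 / (4 * real r))) * exp (real (card (occ w a)) * (-1/2))"
      by (simp only: exp_of_nat_mult)
    also have "\<dots> = exp (real l * (1 / (4 * real r)) + real (card (occ w a)) * (-1/2))"
      by (simp only: exp_add)
    also have "\<dots> = exp (real l / (4 * real r) - real (card (occ w a)) / 2)"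
      by simp
    also have "\<dots> \<ge> 1"
    proof -
      have "real l > 2 * real r * real (card (occ w a))" using w
        by (metis (mono_tags, lifting) mem_Collect_eq of_nat_less_iff of_nat_mult of_nat_numeral)
      hence "real (card (occ w a)) / 2 \<le> real l / (4 * real r)" using rpos by (simp add: field_simps)
      thus ?thesis by simp
    qed
    finally show ?thesis .
  qed
  have "real (card ?S) \<le> (\<Prod>i<l. \<Sum>c\<in>A. g i c)"
    apply (rule markov_prod[OF fin])
      apply (simp add: g_def)
     apply blast
    apply (rule key)
    apply assumption
    done
  also have "\<dots> \<le> (\<Prod>i<l. real r * exp (- (1 / (12 * real r))))"
  proof (rule prod_mono)
    fix i assume "i \<in> {..<l}"
    have nn: "0 \<le> (\<Sum>c\<in>A. g i c)" by (rule sum_nonneg) (auto simp: g_def)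
    have e12: "exp (1/2::real) \<ge> 3/2" using exp_ge_add_one_self[of "1/2::real"] by simp
    have em: "exp (- 1/2::real) \<le> 2/3"
    proof -
      have "exp (- 1/2::real) = 1 / exp (1/2)" by (simp add: exp_minus field_simps)
      also have "\<dots> \<le> 1 / (3/2)" using e12 by (intro divide_left_mono) auto
      finally show ?thesis by simp
    qed
    have S1: "(\<Sum>c\<in>A. if c = a then exp (- 1/2) else (1::real)) = exp (-1/2) + (real r - 1)"
      using sum_if_const1[OF fin, of "{a}" "exp (-1/2)"] a cA by (simp add: if_distrib)
    have S2: "exp (-1/2) + (real r - 1) \<le> real r * (1 + - (1 / (3 * real r)))" using em rpos by (simp add: field_simps)
    have S3: "real r * (1 + - (1 / (3 * real r))) \<le> real r * exp (- (1 / (3 * real r)))"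
      using rpos by (intro mult_left_mono exp_ge_add_one_self) auto
    have "(\<Sum>c\<in>A. g i c) = exp (1 / (4 * real r)) * (\<Sum>c\<in>A. if c = a then exp (- 1/2) else 1)"
      by (simp add: g_def sum_distrib_left)
    also have "\<dots> \<le> exp (1 / (4 * real r)) * (real r * exp (- (1 / (3 * real r))))"
      unfolding S1 using S2 S3 by (intro mult_left_mono) auto
    also have "\<dots> = real r * exp (- (1 / (12 * real r)))"
    proof -
      have "1 / (4 * real r) + - (1 / (3 * real r)) = - (1 / (12 * real r))" using rpos by (simp add: field_simps)
      hence "exp (1 / (4 * real r)) * exp (- (1 / (3 * real r))) = exp (- (1 / (12 * real r)))"
        by (simp only: exp_add[symmetric])
      thus ?thesis by (metis mult.left_commute)
    qed
    finally show "0 \<le> (\<Sum>c\<in>A. g i c) \<and> (\<Sum>c\<in>A. g i c) \<le> real r * exp (- (1 / (12 * real r)))" using nn by simp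
  qed
  also have "\<dots> = real r ^ l * exp (- (1 / (12 * real r))) ^ l"
    by (simp only: prod_constant card_lessThan power_mult_distrib)
  also have "exp (- (1 / (12 * real r))) ^ l = exp (real l * (- (1 / (12 * real r))))"
    by (simp only: exp_of_nat_mult)
  also have "real l * (- (1 / (12 * real r))) = - (real l / (12 * r))"
    by simp
  finally show ?thesis .
qed

lemma two_pow_le_exp: "(2::real) ^ m \<le> exp (real m)"
proof -
  have "(2::real) \<le> exp 1" using exp_ge_add_one_self[of "1::real"] by simp
  hence "(2::real) ^ m \<le> exp 1 ^ m" by (intro power_mono) auto
  also have "\<dots> = exp (real m)" using exp_of_nat_mult[of m "1::real"] by simp
  finally show ?thesis .
qed

lemma exp_m2: "exp (-2::real) \<le> 1/4"
proof -
  have "(2::real) \<le> exp 1" using exp_ge_add_one_self[of "1::real"] by simp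
  hence "4 \<le> exp (1::real) * exp 1" using mult_mono[of 2 "exp (1::real)" 2 "exp 1"] by simp
  hence "4 \<le> exp (2::real)" by (simp add: exp_add[symmetric])
  thus ?thesis by (simp add: exp_minus field_simps)
qed

lemma num_facts:
  assumes r2: "r \<ge> 2" and nlog: "real n \<ge> 2 + log 2 (real r)" and lb: "l \<ge> 2^7 * r^3 * n"
  shows "real (2^n) * real r * exp (- (real l / real (12*r))) \<le> 1/4"
    and "4 * 2^n * 2^n \<le> r^l"
    and "real (2^n) * real r * 2^l * real ((2^n * r)^(128*r^2))
           * exp (- real (128 * r^2) * ((real l / real (8*r) - 3) / real (2*r))) \<le> 1/4"
proof -
  have rpos: "real r > 0" using r2 by simp
  have logr: "log 2 (real r) \<ge> 1" using r2 by (simp add: le_log_iff)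
  have n3: "real n \<ge> 3" using nlog logr by linarith
  have rle: "real r \<le> 2 ^ n"
  proof -
    have "real r = 2 powr (log 2 (real r))" using rpos by simp
    also have "\<dots> \<le> 2 powr (real n)" using nlog logr by (intro powr_mono) auto
    also have "\<dots> = 2 ^ n" by (simp add: powr_realpow)
    finally show ?thesis .
  qed
  have NR: "real (2^n) * real r \<le> exp (2 * real n)"
  proof -
    have "real (2^n) * real r \<le> exp (real n) * exp (real n)"
    proof (rule mult_mono)
      show "real (2^n) \<le> exp (real n)" using two_pow_le_exp[of n] by simp
      show "real r \<le> exp (real n)" using two_pow_le_exp[of n] rle by linarith
    qed auto
    also have "\<dots> = exp (2 * real n)" by (simp add: exp_add[symmetric])
    finally show ?thesis .
  qed
  have "real (2^7 * r^3 * n) \<le> real l" using lb by (simp only: of_nat_le_iff)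
  hence lb': "real l \<ge> 128 * real r ^ 3 * real n" by simp
  have r2': "real r \<ge> 2" using r2 by simp
  have rsq: "real r ^ 2 \<ge> 4" using power_mono[OF r2', of 2] by simp
  have r3: "real r ^ 3 = real r * real r ^ 2" by (simp add: power_numeral_reduce)
  define Z where "Z = real r ^ 3 * real n"
  define Y where "Y = real r ^ 2 * real n"
  have lbZ: "real l \<ge> 128 * Z" using lb' unfolding Z_def by (simp add: mult.assoc)
  have YZ: "2 * Y \<le> Z"
  proof -
    have "2 * (real r ^ 2 * real n) \<le> real r * (real r ^ 2 * real n)"
      using r2' by (intro mult_right_mono) auto
    thus ?thesis unfolding Z_def Y_def r3 by (simp add: mult.assoc)
  qed
  have Yn: "4 * real n \<le> Y" unfolding Y_def using rsq n3 by (intro mult_right_mono) auto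
  have rY: "real r \<le> Y"
  proof -
    have "real r * 1 \<le> real r * real r" using r2' by (intro mult_left_mono) auto
    also have "\<dots> = real r ^ 2 * 1" by (simp add: power2_eq_square)
    also have "\<dots> \<le> real r ^ 2 * real n" using n3 by (intro mult_left_mono) auto
    finally show ?thesis unfolding Y_def by simp
  qed
  show "real (2^n) * real r * exp (- (real l / real (12*r))) \<le> 1/4"
  proof -
    have "128 * real r ^ 3 * real n / (12 * real r) \<le> real l / (12 * real r)"
      using lb' rpos by (intro divide_right_mono) auto
    hence "real l / real (12*r) \<ge> 128 * real r ^ 3 * real n / (12 * real r)" by simp
    also have "128 * real r ^ 3 * real n / (12 * real r) = 32/3 * Y"
      unfolding Y_def r3 using rpos by (simp add: field_simps)
    finally have h: "real l / real (12*r) \<ge> 32/3 * Y" .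
    have "real (2^n) * real r * exp (- (real l / real (12*r))) \<le> exp (2 * real n) * exp (- (real l / real (12*r)))"
      using NR by (intro mult_right_mono) auto
    also have "\<dots> = exp (2 * real n - real l / real (12*r))" by (simp add: exp_diff exp_minus field_simps)
    also have "\<dots> \<le> exp (-2)" using h Yn n3 by simp
    also have "\<dots> \<le> 1/4" by (rule exp_m2)
    finally show ?thesis .
  qed
  show "4 * 2^n * 2^n \<le> r^l"
  proof -
    have "1 \<le> r^3" using r2 by simp
    hence h: "128 * n * 1 \<le> 128 * n * r^3" by (intro mult_left_mono) auto
    have e: "2^7 * r^3 * n = 128 * n * r^3" by (simp add: mult_ac)
    have "128 * n \<le> l" using lb h e by linarith
    hence nl: "n + n + 2 \<le> l" using n3 by linarith
    have "4 * 2^n * 2^n = (2::nat)^(n + n + 2)" by (simp add: power_add)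
    also have "\<dots> \<le> 2^l" using nl by (intro power_increasing) auto
    also have "\<dots> \<le> r^l" using r2 by (intro power_mono) auto
    finally show ?thesis .
  qed
  show "real (2^n) * real r * 2^l * real ((2^n * r)^(128*r^2))
           * exp (- real (128 * r^2) * ((real l / real (8*r) - 3) / real (2*r))) \<le> 1/4"
  proof -
    define Kr where "Kr = real (128 * r^2)"
    have KrY: "Kr * real n = 128 * Y" by (simp add: Kr_def Y_def)
    have Kc: "Kr * ((real l / real (8*r) - 3) / real (2*r)) = 8 * real l - 192 * real r"
      unfolding Kr_def using rpos by (simp add: field_simps power2_eq_square)
    have p1: "real ((2^n * r)^(128*r^2)) \<le> exp (Kr * (2 * real n))"
    proof -
      have "real ((2^n * r)^(128*r^2)) = (real (2^n) * real r) ^ (128*r^2)" by simp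
      also have "\<dots> \<le> exp (2 * real n) ^ (128*r^2)" using NR by (intro power_mono) auto
      also have "\<dots> = exp (Kr * (2 * real n))" unfolding Kr_def by (simp add: exp_of_nat_mult[symmetric])
      finally show ?thesis .
    qed
    have "real (2^n) * real r * 2^l * real ((2^n * r)^(128*r^2)) * exp (- Kr * ((real l / real (8*r) - 3) / real (2*r)))
        \<le> exp (2 * real n) * exp (real l) * exp (Kr * (2 * real n)) * exp (- Kr * ((real l / real (8*r) - 3) / real (2*r)))"
      using NR two_pow_le_exp[of l] p1 by (intro mult_mono mult_nonneg_nonneg) auto
    also have "\<dots> = exp (2 * real n + real l + Kr * (2 * real n) + - Kr * ((real l / real (8*r) - 3) / real (2*r)))"
      by (simp only: exp_add)
    also have "\<dots> = exp (2 * real n + real l + Kr * (2 * real n) - Kr * ((real l / real (8*r) - 3) / real (2*r)))"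
      by simp
    also have "\<dots> \<le> exp (-2)"
    proof -
      have "2 * real n + real l + Kr * (2 * real n) - Kr * ((real l / real (8*r) - 3) / real (2*r))
          = 2 * real n + real l + 256 * Y - (8 * real l - 192 * real r)"
        using KrY Kc by (simp add: algebra_simps)
      also have "\<dots> \<le> -2" using lbZ YZ Yn rY n3 by linarith
      finally show ?thesis by simp
    qed
    also have "\<dots> \<le> 1/4" by (rule exp_m2)
    finally show ?thesis unfolding Kr_def .
  qed
qed

lemma cE:
  fixes A :: "nat set"
  assumes fin: "finite A" and cA: "card A = r" and r0: "r > 0" and iN: "i < N"
   and W: "W = {v. length v = l \<and> set v \<subseteq> A}"
   and kI: "real (card I) \<le> real l / real (8*r) + 1"
   and Q: "Q \<subseteq> ({..<N} - {i}) \<times> A" and cQ: "card Q = K"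
  shows "real (card (\<Union>v\<in>{v\<in>W. I \<subseteq> occ v a \<and> l \<le> 2*r*card (occ v a)}.
            PiE {..<N} (\<lambda>j. if j = i then {v} else
               {w\<in>W. \<forall>b\<in>{b. (j,b)\<in>Q}. card (occ v a \<inter> occ w b) \<le> 2*card (I \<inter> occ w b)})))
         \<le> real r ^ l * ((real r ^ l) ^ (N-1) * exp (- real K * ((real l / real (8*r) - 3) / real (2*r))))"
proof -
  define c where "c = (real l / real (8*r) - 3) / real (2*r)"
  define D where "D = {..<N} - {i}"
  define q where "q = (\<lambda>j. card {b. (j,b)\<in>Q})"
  have finW: "finite W" unfolding W using finite_lists_length_eq[OF fin, of l]
    by (metis (no_types, lifting) Collect_cong)
  have cW: "card W = r ^ l" unfolding W using card_lists_length_eq[OF fin, of l] cA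
    by (metis (no_types, lifting) Collect_cong)
  have finD: "finite D" by (simp add: D_def)
  have cD: "card D = N - 1" using iN by (simp add: D_def)
  have qsub: "{b. (j,b)\<in>Q} \<subseteq> A" for j using Q by auto
  have sumq: "(\<Sum>j\<in>D. real (q j)) = real K"
  proof -
    have QD: "Q \<subseteq> D \<times> A" using Q by (simp add: D_def)
    have Qeq: "Sigma D (\<lambda>j. {b. (j,b)\<in>Q}) = Q"
    proof (intro set_eqI iffI)
      fix p assume "p \<in> Q" then show "p \<in> Sigma D (\<lambda>j. {b. (j,b)\<in>Q})" using QD by (cases p) auto
    next
      fix p assume "p \<in> Sigma D (\<lambda>j. {b. (j,b)\<in>Q})" then show "p \<in> Q" by auto
    qed
    have "card (Sigma D (\<lambda>j. {b. (j,b)\<in>Q})) = (\<Sum>j\<in>D. card {b. (j,b)\<in>Q})"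
      by (rule card_SigmaI[OF finD]) (use qsub fin finite_subset in blast)
    hence "card Q = (\<Sum>j\<in>D. q j)" unfolding q_def by (simp only: Qeq)
    thus ?thesis using cQ by (metis of_nat_sum)
  qed
  let ?V = "{v\<in>W. I \<subseteq> occ v a \<and> l \<le> 2*r*card (occ v a)}"
  show ?thesis
  proof (rule card_UN_real2)
    show "finite ?V" using finW by simp
    show "real (card ?V) \<le> real r ^ l"
      using card_mono[OF finW, of ?V] cW by (metis (no_types, lifting) mem_Collect_eq of_nat_le_iff of_nat_power subsetI)
    show "0 \<le> (real r ^ l) ^ (N-1) * exp (- real K * ((real l / real (8*r) - 3) / real (2*r)))" by simp
  next
    fix v assume v: "v \<in> ?V"
    have lv: "length v = l" using v W by auto
    let ?B = "\<lambda>j. if j = i then {v} else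
               {w\<in>W. \<forall>b\<in>{b. (j,b)\<in>Q}. card (occ v a \<inter> occ w b) \<le> 2*card (I \<inter> occ w b)}"
    have "real (card (PiE {..<N} ?B)) = (\<Prod>j<N. real (card (?B j)))"
      by (simp add: card_PiE)
    also have "\<dots> \<le> (\<Prod>j<N. if j = i then 1 else real r ^ l * exp (- real (q j) * c))"
    proof (rule prod_mono)
      fix j assume j: "j \<in> {..<N}"
      show "0 \<le> real (card (?B j)) \<and> real (card (?B j)) \<le> (if j = i then 1 else real r ^ l * exp (- real (q j) * c))"
      proof (cases "j = i")
        case True thus ?thesis by simp
      next
        case False
        have eq: "?B j = {w. (length w = l \<and> set w \<subseteq> A) \<and>
            (\<forall>b\<in>{b. (j,b)\<in>Q}. card (occ v a \<inter> occ w b) \<le> 2 * card (I \<inter> occ w b))}"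
          using False W by auto
        have "real (card (?B j)) \<le> real r ^ l * exp (- real (card {b. (j,b)\<in>Q}) * ((real l / (8*r) - 3) / (2*r)))"
          unfolding eq by (rule word_bad_count[OF fin cA r0 lv _ kI _ qsub]) (use v in auto)
        thus ?thesis using False by (simp add: q_def c_def)
      qed
    qed
    also have "\<dots> = (if i = i then 1 else real r ^ l * exp (- real (q i) * c)) *
        (\<Prod>j\<in>D. if j = i then 1 else real r ^ l * exp (- real (q j) * c))"
      unfolding D_def by (rule prod.remove) (use iN in auto)
    also have "(\<Prod>j\<in>D. if j = i then 1 else real r ^ l * exp (- real (q j) * c)) = (\<Prod>j\<in>D. real r ^ l * exp (- real (q j) * c))"
      by (rule prod.cong) (auto simp: D_def)
    also have "\<dots> = (real r ^ l) ^ (N-1) * exp (\<Sum>j\<in>D. - real (q j) * c)"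
      using cD finD by (simp add: prod.distrib exp_sum)
    also have "(\<Sum>j\<in>D. - real (q j) * c) = - real K * c"
      using sumq by (simp add: sum_distrib_right[symmetric] sum_negf)
    finally show "real (card (PiE {..<N} ?B)) \<le> (real r ^ l) ^ (N-1) * exp (- real K * ((real l / real (8*r) - 3) / real (2*r)))"
      by (simp add: c_def)
  qed
qed

lemma main:
  fixes A :: "nat set"
  assumes fin: "finite A" and cA: "card A = r" and r2: "r \<ge> 2"
    and nlog: "real n \<ge> 2 + log 2 (real r)" and lb: "l \<ge> 2^7 * r^3 * n"
  shows "\<exists>S. S \<subseteq> {v. length v = l \<and> set v \<subseteq> A} \<and> card S = 2^n \<and>
        (\<forall>v\<in>S. \<forall>a\<in>A.
           real (card (occ v a)) \<ge> real l / (2 * real r) \<and>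
           (\<forall>I. I \<subseteq> occ v a \<longrightarrow> card I = nat \<lceil>real l / (8 * real r)\<rceil> \<longrightarrow>
              real (card {(w, b). w \<in> S \<and> b \<in> A \<and>
                  2 * card (I \<inter> occ w b) \<ge> card (occ v a \<inter> occ w b)})
                \<le> 129 * (real r)^2))"
proof -
  have r0: "r > 0" using r2 by simp
  have rpos: "real r > 0" using r0 by simp
  define N where "N = (2::nat)^n"
  define W where "W = {v. length v = l \<and> set v \<subseteq> A}"
  define X where "X = PiE {..<N} (\<lambda>_. W)"
  define k where "k = nat \<lceil>real l / (8 * real r)\<rceil>"
  define K where "K = 128 * r^2"
  define c where "c = (real l / real (8*r) - 3) / real (2*r)"
  have N1: "N \<ge> 1" by (simp add: N_def)
  have finW: "finite W" unfolding W_def using finite_lists_length_eq[OF fin, of l]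
    by (metis (no_types, lifting) Collect_cong)
  have cW: "card W = r ^ l" unfolding W_def using card_lists_length_eq[OF fin, of l] cA
    by (metis (no_types, lifting) Collect_cong)
  have finX: "finite X" unfolding X_def by (intro finite_PiE) (auto simp: finW)
  have cX: "card X = (r^l)^N" unfolding X_def by (simp add: card_PiE cW)
  have kI: "real k \<le> real l / real (8*r) + 1"
  proof -
    have h0: "0 \<le> real l / (8 * real r)" using rpos by simp
    have h1: "-1 < real l / (8 * real r)" using h0 by linarith
    have "real k = real_of_int \<lceil>real l / (8 * real r)\<rceil>" unfolding k_def
      by (intro of_nat_nat) (simp add: h1)
    also have "\<dots> \<le> real l / (8 * real r) + 1" by (rule of_int_ceiling_le_add_one)
    finally show ?thesis by simp
  qed
  define Wbad where "Wbad = (\<lambda>a. {w. (length w = l \<and> set w \<subseteq> A) \<and> l > 2 * r * card (occ w a)})"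
  define BadA where "BadA = (\<Union>i\<in>{..<N}. \<Union>a\<in>A. PiE {..<N} (\<lambda>j. if j = i then Wbad a else W))"
  define BadB where "BadB = (\<Union>i\<in>{..<N}. \<Union>j\<in>{..<N} - {i}. {x \<in> PiE {..<N} (\<lambda>_. W). x i = x j})"
  define V where "V = (\<lambda>a I. {v\<in>W. I \<subseteq> occ v a \<and> l \<le> 2*r*card (occ v a)})"
  define Ii where "Ii = {I. I \<subseteq> {..<l} \<and> card I = k}"
  define Qs where "Qs = (\<lambda>i. {Q. Q \<subseteq> ({..<N} - {i}) \<times> A \<and> card Q = K})"
  define E where "E = (\<lambda>i a I Q. \<Union>v\<in>V a I. PiE {..<N} (\<lambda>j. if j = i then {v} else
               {w\<in>W. \<forall>b\<in>{b. (j,b)\<in>Q}. card (occ v a \<inter> occ w b) \<le> 2*card (I \<inter> occ w b)}))"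
  define BadC where "BadC = (\<Union>i\<in>{..<N}. \<Union>a\<in>A. \<Union>I\<in>Ii. \<Union>Q\<in>Qs i. E i a I Q)"
  define P where "P = (real r ^ l) ^ (N-1)"
  have Ppos: "P > 0" unfolding P_def using rpos by simp
  have RP: "real (card X) = real r ^ l * P"
  proof -
    have "(real r ^ l) ^ N = (real r ^ l) ^ Suc (N - 1)" using N1 by simp
    also have "\<dots> = real r ^ l * P" unfolding P_def by (simp only: power_Suc)
    finally have "(real r ^ l) ^ N = real r ^ l * P" .
    thus ?thesis using cX by simp
  qed
  have WbadW: "Wbad a \<subseteq> W" for a by (auto simp: Wbad_def W_def)
  have cBadA: "real (card BadA) \<le> real N * (real r * (real r ^ l * exp (- (real l / real (12*r))) * P))"
    unfolding BadA_def
  proof (rule card_UN_real2)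
    fix i assume i: "i \<in> {..<N}"
    show "real (card (\<Union>a\<in>A. PiE {..<N} (\<lambda>j. if j = i then Wbad a else W)))
        \<le> real r * (real r ^ l * exp (- (real l / real (12*r))) * P)"
    proof (rule card_UN_real2)
      fix a assume a: "a \<in> A"
      have fWb: "finite (Wbad a)" using finite_subset[OF WbadW finW] .
      have "card (PiE {..<N} (\<lambda>j. if j = i then Wbad a else W)) = card (Wbad a) * card W ^ (N - 1)"
        using i by (intro card_PiE_single fWb finW) auto
      hence "real (card (PiE {..<N} (\<lambda>j. if j = i then Wbad a else W))) = real (card (Wbad a)) * P"
        by (simp add: P_def cW)
      also have "\<dots> \<le> real r ^ l * exp (- (real l / real (12*r))) * P"
        using few_a_count[OF fin cA r0 a, of l] Ppos unfolding Wbad_def by (intro mult_right_mono) auto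
      finally show "real (card (PiE {..<N} (\<lambda>j. if j = i then Wbad a else W))) \<le> real r ^ l * exp (- (real l / real (12*r))) * P" .
    qed (use fin cA Ppos in auto)
  qed (use Ppos in auto)
  have cBadB: "real (card BadB) \<le> real N * (real N * P)"
    unfolding BadB_def
  proof (rule card_UN_real2)
    fix i assume i: "i \<in> {..<N}"
    show "real (card (\<Union>j\<in>{..<N} - {i}. {x \<in> PiE {..<N} (\<lambda>_. W). x i = x j})) \<le> real N * P"
    proof (rule card_UN_real2)
      fix j assume j: "j \<in> {..<N} - {i}"
      have "card {x \<in> PiE {..<N} (\<lambda>_. W). x i = x j} \<le> card W ^ (N - 1)"
        using i j finW by (intro card_eq_pair) auto
      hence "real (card {x \<in> PiE {..<N} (\<lambda>_. W). x i = x j}) \<le> real (card W ^ (N - 1))"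
        by (simp only: of_nat_le_iff)
      thus "real (card {x \<in> PiE {..<N} (\<lambda>_. W). x i = x j}) \<le> P"
        unfolding P_def cW by simp
    next
      have "card ({..<N} - {i}) \<le> card {..<N}" by (rule card_mono) auto
      thus "real (card ({..<N} - {i})) \<le> real N" by simp
    qed (use Ppos in auto)
  qed (use Ppos in auto)
  have cBadC: "real (card BadC) \<le> real N * (real r * (2^l * (real ((N*r)^K) * (real r ^ l * (P * exp (- real K * c))))))"
    unfolding BadC_def
  proof (rule card_UN_real2)
    fix i assume i: "i \<in> {..<N}"
    show "real (card (\<Union>a\<in>A. \<Union>I\<in>Ii. \<Union>Q\<in>Qs i. E i a I Q))
        \<le> real r * (2^l * (real ((N*r)^K) * (real r ^ l * (P * exp (- real K * c)))))"
    proof (rule card_UN_real2)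
      fix a assume a: "a \<in> A"
      show "real (card (\<Union>I\<in>Ii. \<Union>Q\<in>Qs i. E i a I Q))
          \<le> 2^l * (real ((N*r)^K) * (real r ^ l * (P * exp (- real K * c))))"
      proof (rule card_UN_real2)
        fix I assume I: "I \<in> Ii"
        show "real (card (\<Union>Q\<in>Qs i. E i a I Q)) \<le> real ((N*r)^K) * (real r ^ l * (P * exp (- real K * c)))"
        proof (rule card_UN_real2)
          fix Q assume Q: "Q \<in> Qs i"
          have cI: "real (card I) \<le> real l / real (8*r) + 1" using I kI by (simp add: Ii_def)
          show "real (card (E i a I Q)) \<le> real r ^ l * (P * exp (- real K * c))"
            unfolding E_def V_def P_def c_def
            by (rule cE[OF fin cA r0 _ W_def cI]) (use i Q in \<open>auto simp: Qs_def\<close>)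
        next
          have fD: "finite (({..<N} - {i}) \<times> A)" using fin by simp
          have "card (Qs i) = card (({..<N} - {i}) \<times> A) choose K"
            unfolding Qs_def by (rule n_subsets[OF fD])
          also have "\<dots> \<le> card (({..<N} - {i}) \<times> A) ^ K" by (rule choose_le_pow)
          also have "\<dots> \<le> (N*r) ^ K"
          proof (rule power_mono)
            have "card (({..<N} - {i}) \<times> A) = card ({..<N} - {i}) * r" by (simp add: card_cartesian_product cA)
            also have "\<dots> \<le> N * r" using card_mono[of "{..<N}" "{..<N}-{i}"] by (intro mult_right_mono) auto
            finally show "card (({..<N} - {i}) \<times> A) \<le> N * r" .
          qed simp
          finally show "real (card (Qs i)) \<le> real ((N*r)^K)" by (simp only: of_nat_le_iff)
        next
          show "finite (Qs i)" unfolding Qs_def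
            by (rule finite_subset[of _ "Pow (({..<N} - {i}) \<times> A)"]) (use fin in auto)
        qed (use Ppos in auto)
      next
        have "card Ii = l choose k" unfolding Ii_def using n_subsets[of "{..<l}" k] by simp
        also have "\<dots> \<le> 2 ^ l" by (rule binomial_le_pow2)
        finally have "card Ii \<le> 2 ^ l" .
        hence "real (card Ii) \<le> real ((2::nat) ^ l)" by (simp only: of_nat_le_iff)
        thus "real (card Ii) \<le> 2 ^ l" by simp
      next
        show "finite Ii" unfolding Ii_def by (rule finite_subset[of _ "Pow {..<l}"]) auto
      qed (use Ppos in auto)
    qed (use fin cA Ppos in auto)
  qed (use Ppos in auto)
  have fa: "real N * real r * exp (- (real l / real (12*r))) \<le> 1/4"
    using num_facts(1)[OF r2 nlog lb] by (simp add: N_def)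
  have fb: "4 * N * N \<le> r^l" using num_facts(2)[OF r2 nlog lb] by (simp add: N_def)
  have fc: "real N * real r * 2^l * real ((N * r)^K) * exp (- real K * c) \<le> 1/4"
    using num_facts(3)[OF r2 nlog lb] by (simp add: N_def K_def c_def)
  define R where "R = real r ^ l * P"
  have Rpos: "R > 0" unfolding R_def using Ppos rpos by simp
  have bA: "real (card BadA) \<le> R / 4"
  proof -
    have "real N * (real r * (real r ^ l * exp (- (real l / real (12*r))) * P))
        = (real N * real r * exp (- (real l / real (12*r)))) * R" by (simp add: R_def mult_ac)
    also have "\<dots> \<le> (1/4) * R" using fa Rpos by (intro mult_right_mono) auto
    finally show ?thesis using cBadA by simp
  qed
  have bB: "real (card BadB) \<le> R / 4"
  proof -
    have "real (4 * N * N) \<le> real (r^l)" using fb by (simp only: of_nat_le_iff)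
    hence "4 * (real N * real N) \<le> real r ^ l" by simp
    hence "4 * (real N * real N) * P \<le> real r ^ l * P" using Ppos by (intro mult_right_mono) auto
    hence "real N * (real N * P) \<le> R / 4" unfolding R_def by (simp add: field_simps)
    thus ?thesis using cBadB by simp
  qed
  have bC: "real (card BadC) \<le> R / 4"
  proof -
    have "real N * (real r * (2^l * (real ((N*r)^K) * (real r ^ l * (P * exp (- real K * c))))))
        = (real N * real r * 2^l * real ((N * r)^K) * exp (- real K * c)) * R"
      by (simp only: R_def mult_ac)
    also have "\<dots> \<le> (1/4) * R" using fc Rpos by (intro mult_right_mono) auto
    finally show ?thesis using cBadC by simp
  qed
  have subA: "BadA \<subseteq> X"
  proof
    fix x assume "x \<in> BadA"
    then obtain i a where xi: "x \<in> PiE {..<N} (\<lambda>j. if j = i then Wbad a else W)" unfolding BadA_def by blast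
    have "PiE {..<N} (\<lambda>j. if j = i then Wbad a else W) \<subseteq> PiE {..<N} (\<lambda>_. W)"
      by (rule PiE_mono) (use WbadW in auto)
    thus "x \<in> X" unfolding X_def using xi by blast
  qed
  have subB: "BadB \<subseteq> X" unfolding BadB_def X_def by auto
  have subC: "BadC \<subseteq> X"
  proof -
    have "E i a I Q \<subseteq> X" for i a I Q
    proof
      fix x assume "x \<in> E i a I Q"
      then obtain v where v: "v \<in> V a I" and
        x: "x \<in> PiE {..<N} (\<lambda>j. if j = i then {v} else
               {w\<in>W. \<forall>b\<in>{b. (j,b)\<in>Q}. card (occ v a \<inter> occ w b) \<le> 2*card (I \<inter> occ w b)})"
        unfolding E_def by blast
      have "v \<in> W" using v by (simp add: V_def)
      hence "PiE {..<N} (\<lambda>j. if j = i then {v} else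
               {w\<in>W. \<forall>b\<in>{b. (j,b)\<in>Q}. card (occ v a \<inter> occ w b) \<le> 2*card (I \<inter> occ w b)}) \<subseteq> PiE {..<N} (\<lambda>_. W)"
        by (intro PiE_mono) auto
      then show "x \<in> X" unfolding X_def using x by blast
    qed
    thus ?thesis unfolding BadC_def by blast
  qed
  have "\<exists>x\<in>X. x \<notin> BadA \<union> BadB \<union> BadC"
  proof (rule ccontr)
    assume "\<not> ?thesis"
    hence "X \<subseteq> BadA \<union> BadB \<union> BadC" by blast
    moreover have "finite (BadA \<union> BadB \<union> BadC)" using subA subB subC finX finite_subset by blast
    ultimately have "card X \<le> card (BadA \<union> BadB \<union> BadC)" by (rule card_mono[rotated])
    also have "\<dots> \<le> card (BadA \<union> BadB) + card BadC" by (rule card_Un_le)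
    also have "\<dots> \<le> card BadA + card BadB + card BadC" using card_Un_le[of BadA BadB] by simp
    finally have "real (card X) \<le> real (card BadA + card BadB + card BadC)"
      by (simp only: of_nat_le_iff)
    hence "real (card X) \<le> real (card BadA) + real (card BadB) + real (card BadC)" by simp
    also have "\<dots> \<le> 3/4 * R" using bA bB bC by simp
    finally have "real (card X) \<le> 3/4 * R" .
    moreover have "real (card X) = R" using RP by (simp add: R_def)
    ultimately show False using Rpos by linarith
  qed
  then obtain x where xX: "x \<in> X" and xA: "x \<notin> BadA" and xB: "x \<notin> BadB" and xC: "x \<notin> BadC" by blast
  have xW: "x j \<in> W" if "j < N" for j using xX that by (auto simp: X_def)
  have xE: "x \<in> extensional {..<N}" using xX by (simp add: X_def PiE_iff)
  have inj: "inj_on x {..<N}"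
  proof (rule inj_onI)
    fix i j assume i: "i \<in> {..<N}" and j: "j \<in> {..<N}" and e: "x i = x j"
    show "i = j"
    proof (rule ccontr)
      assume "i \<noteq> j"
      hence "x \<in> BadB" unfolding BadB_def using i j e xX by (auto simp: X_def)
      thus False using xB by simp
    qed
  qed
  have good1: "l \<le> 2 * r * card (occ (x i) a)" if i: "i < N" and a: "a \<in> A" for i a
  proof (rule ccontr)
    assume "\<not> ?thesis"
    hence "x i \<in> Wbad a" using xW[OF i] by (auto simp: Wbad_def W_def)
    hence "x \<in> PiE {..<N} (\<lambda>j. if j = i then Wbad a else W)"
      using xW xE by (auto simp: PiE_iff)
    hence "x \<in> BadA" unfolding BadA_def using i a by blast
    thus False using xA by simp
  qed
  define S where "S = x ` {..<N}"
  have SW: "S \<subseteq> {v. length v = l \<and> set v \<subseteq> A}" unfolding S_def using xW by (auto simp: W_def)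
  have cS: "card S = 2^n" unfolding S_def using card_image[OF inj] by (simp add: N_def)
  have props: "real (card (occ v a)) \<ge> real l / (2 * real r) \<and>
           (\<forall>I. I \<subseteq> occ v a \<longrightarrow> card I = nat \<lceil>real l / (8 * real r)\<rceil> \<longrightarrow>
              real (card {(w, b). w \<in> S \<and> b \<in> A \<and>
                  2 * card (I \<inter> occ w b) \<ge> card (occ v a \<inter> occ w b)})
                \<le> 129 * (real r)^2)" if v: "v \<in> S" and a: "a \<in> A" for v a
  proof -
    obtain i where i: "i < N" and vi: "v = x i" using v unfolding S_def by blast
    have g1: "l \<le> 2 * r * card (occ v a)" using good1[OF i a] vi by simp
    have p1: "real (card (occ v a)) \<ge> real l / (2 * real r)"
    proof -
      have "real l \<le> real (2 * r * card (occ v a))" using g1 by (simp only: of_nat_le_iff)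
      hence "real l \<le> 2 * real r * real (card (occ v a))" by simp
      thus ?thesis using rpos by (simp add: field_simps)
    qed
    have p2: "real (card {(w, b). w \<in> S \<and> b \<in> A \<and> 2 * card (I \<inter> occ w b) \<ge> card (occ v a \<inter> occ w b)})
              \<le> 129 * (real r)^2"
      if I: "I \<subseteq> occ v a" and cI: "card I = nat \<lceil>real l / (8 * real r)\<rceil>" for I
    proof -
      let ?bad = "\<lambda>w b. card (occ v a \<inter> occ w b) \<le> 2 * card (I \<inter> occ w b)"
      let ?Ps = "{(w, b). w \<in> S \<and> b \<in> A \<and> 2 * card (I \<inter> occ w b) \<ge> card (occ v a \<inter> occ w b)}"
      define P' where "P' = {(j, b). j < N \<and> b \<in> A \<and> ?bad (x j) b}"
      define Q0 where "Q0 = {(j, b). j \<in> {..<N} - {i} \<and> b \<in> A \<and> ?bad (x j) b}"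
      have finP': "finite P'" unfolding P'_def
        by (rule finite_subset[of _ "{..<N} \<times> A"]) (use fin in auto)
      have finQ0: "finite Q0" unfolding Q0_def
        by (rule finite_subset[of _ "{..<N} \<times> A"]) (use fin in auto)
      have "?Ps \<subseteq> (\<lambda>(j, b). (x j, b)) ` P'"
      proof
        fix p assume "p \<in> ?Ps"
        then obtain w b where p: "p = (w, b)" and w: "w \<in> S" and b: "b \<in> A" and bd: "?bad w b" by auto
        obtain j where j: "j < N" and wj: "w = x j" using w unfolding S_def by blast
        have "(j, b) \<in> P'" unfolding P'_def using j b bd wj by auto
        thus "p \<in> (\<lambda>(j, b). (x j, b)) ` P'" using p wj by force
      qed
      hence c1: "card ?Ps \<le> card P'"
        using card_mono[OF finite_imageI[OF finP']] card_image_le[OF finP'] le_trans by blast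
      have "P' \<subseteq> ({i} \<times> A) \<union> Q0" unfolding P'_def Q0_def by auto
      moreover have "finite (({i} \<times> A) \<union> Q0)" using fin finQ0 by simp
      ultimately have "card P' \<le> card (({i} \<times> A) \<union> Q0)" by (intro card_mono)
      also have "\<dots> \<le> card ({i} \<times> A) + card Q0" by (rule card_Un_le)
      finally have "card P' \<le> card ({i} \<times> A) + card Q0" .
      moreover have "card ({i} \<times> A) = r" by (simp only: card_cartesian_product_singleton cA)
      ultimately have c2: "card P' \<le> r + card Q0" by linarith
      have c3: "card Q0 < K"
      proof (rule ccontr)
        assume "\<not> card Q0 < K"
        hence "K \<le> card Q0" by simp
        then obtain Q where QQ: "Q \<subseteq> Q0" and cQ: "card Q = K" and "finite Q"
          by (rule obtain_subset_with_card_n)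
        have IIi: "I \<in> Ii"
        proof -
          have "I \<subseteq> {..<l}" using I occ_sub[of v a] xW[OF i] vi by (auto simp: W_def)
          thus ?thesis using cI by (simp add: Ii_def k_def)
        qed
        have QQs: "Q \<in> Qs i" using QQ cQ unfolding Qs_def Q0_def by auto
        have vV: "x i \<in> V a I" using xW[OF i] I vi good1[OF i a] by (simp add: V_def)
        have "x \<in> PiE {..<N} (\<lambda>j. if j = i then {x i} else
               {w\<in>W. \<forall>b\<in>{b. (j,b)\<in>Q}. card (occ (x i) a \<inter> occ w b) \<le> 2*card (I \<inter> occ w b)})"
        proof (subst PiE_iff, intro conjI ballI)
          fix j assume j: "j \<in> {..<N}"
          show "x j \<in> (if j = i then {x i} else
               {w\<in>W. \<forall>b\<in>{b. (j,b)\<in>Q}. card (occ (x i) a \<inter> occ w b) \<le> 2*card (I \<inter> occ w b)})"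
          proof (cases "j = i")
            case False
            have "\<forall>b\<in>{b. (j,b)\<in>Q}. card (occ (x i) a \<inter> occ (x j) b) \<le> 2*card (I \<inter> occ (x j) b)"
              using QQ vi unfolding Q0_def by auto
            thus ?thesis using False xW j by auto
          qed simp
        qed (rule xE)
        hence "x \<in> E i a I Q" unfolding E_def using vV by blast
        hence "x \<in> BadC" unfolding BadC_def using i a IIi QQs by blast
        thus False using xC by simp
      qed
      have "card ?Ps \<le> r + K" using c1 c2 c3 by linarith
      hence "real (card ?Ps) \<le> real (r + K)" by (simp only: of_nat_le_iff)
      hence "real (card ?Ps) \<le> real r + 128 * real r ^ 2" unfolding K_def by simp
      also have "\<dots> \<le> 129 * real r ^ 2"
      proof -
        have "real r \<le> real r ^ 2" using r2 by (simp add: power2_eq_square)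
        thus ?thesis by simp
      qed
      finally show ?thesis .
    qed
    show ?thesis using p1 p2 by blast
  qed
  show ?thesis using SW cS props by blast
qed

theorem lemma2:
  "\<exists>C::real. \<forall>(\<Sigma>::nat set) r n l.
     finite \<Sigma> \<longrightarrow> card \<Sigma> = r \<longrightarrow> r \<ge> 2 \<longrightarrow>
     real n \<ge> 2 + log 2 (real r) \<longrightarrow> l \<ge> 2^7 * r^3 * n \<longrightarrow>
     (\<exists>S. S \<subseteq> {v. length v = l \<and> set v \<subseteq> \<Sigma>} \<and> card S = 2^n \<and>
        (\<forall>v\<in>S. \<forall>a\<in>\<Sigma>.
           real (card (occ v a)) \<ge> real l / (2 * real r) \<and>
           (\<forall>I. I \<subseteq> occ v a \<longrightarrow> card I = nat \<lceil>real l / (8 * real r)\<rceil> \<longrightarrow>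
              real (card {(w, b). w \<in> S \<and> b \<in> \<Sigma> \<and>
                  2 * card (I \<inter> occ w b) \<ge> card (occ v a \<inter> occ w b)})
                \<le> C * (real r)^2)))"
    apply (rule exI[of _ "129"])
  apply (intro allI impI)
  apply (rule main)
      apply assumption+
  done

end
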